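(* Let $G$ and $A$ be finite groups with $A$ acting on $G$ by automorphisms, and let $B\leq A$ (acting on $G$ by restriction). (i) If $\Gamma(G,B)$ is connected of diameter $d$, then $\Gamma(G,A)$ is connected of diameter at most $d$. (ii) If $\Gamma(G,B)$ has $m$ connected components, then $\Gamma(G,A)$ has at most $m$ connected components.
   Context: For a finite group $A$ acting by automorphisms on a finite group $G$, the commuting graph of $A$-orbits $\Gamma(G,A)$ is the simple graph whose vertex set is the set $\{x^{A}: x\in G\setminus\{1\}\}$ of $A$-orbits on $G\setminus\{1\}$, two distinct vertices $\mathcal{O},\mathcal{O}'$ being adjacent if and only if there exist $x\in\mathcal{O}$ and $y\in\mathcal{O}'$ with $xy=yx$. *)

theory Defs
  imports "HOL-Algebra.Algebra"
begin

definition acts_by_automorphisms :: "('b, 'c) monoid_scheme \<Rightarrow> ('a, 'd) monoid_scheme \<Rightarrow> ('b \<Rightarrow> 'a \<Rightarrow> 'a) \<Rightarrow> bool" where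
  "acts_by_automorphisms A G \<phi> \<longleftrightarrow>
     group A \<and> group G \<and> group_action A (carrier G) \<phi> \<and> (\<forall>a \<in> carrier A. \<phi> a \<in> auto G)"

definition orbit_graph_vertices :: "('b, 'c) monoid_scheme \<Rightarrow> ('a, 'd) monoid_scheme \<Rightarrow> ('b \<Rightarrow> 'a \<Rightarrow> 'a) \<Rightarrow> 'a set set" where
  "orbit_graph_vertices A G \<phi> = {orbit A \<phi> x | x. x \<in> carrier G - {\<one>\<^bsub>G\<^esub>}}"

definition orbit_graph_adj :: "('a, 'd) monoid_scheme \<Rightarrow> 'a set \<Rightarrow> 'a set \<Rightarrow> bool" where
  "orbit_graph_adj G P Q \<longleftrightarrow> P \<noteq> Q \<and> (\<exists>x \<in> P. \<exists>y \<in> Q. x \<otimes>\<^bsub>G\<^esub> y = y \<otimes>\<^bsub>G\<^esub> x)"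

definition is_walk :: "'v set \<Rightarrow> ('v \<Rightarrow> 'v \<Rightarrow> bool) \<Rightarrow> 'v list \<Rightarrow> bool" where
  "is_walk V E xs \<longleftrightarrow> xs \<noteq> [] \<and> set xs \<subseteq> V \<and> (\<forall>i. Suc i < length xs \<longrightarrow> E (xs ! i) (xs ! Suc i))"

definition walk_of_length :: "'v set \<Rightarrow> ('v \<Rightarrow> 'v \<Rightarrow> bool) \<Rightarrow> nat \<Rightarrow> 'v \<Rightarrow> 'v \<Rightarrow> bool" where
  "walk_of_length V E n u v \<longleftrightarrow> (\<exists>xs. is_walk V E xs \<and> hd xs = u \<and> last xs = v \<and> length xs = Suc n)"

definition reachable :: "'v set \<Rightarrow> ('v \<Rightarrow> 'v \<Rightarrow> bool) \<Rightarrow> 'v \<Rightarrow> 'v \<Rightarrow> bool" where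
  "reachable V E u v \<longleftrightarrow> (\<exists>n. walk_of_length V E n u v)"

definition graph_dist :: "'v set \<Rightarrow> ('v \<Rightarrow> 'v \<Rightarrow> bool) \<Rightarrow> 'v \<Rightarrow> 'v \<Rightarrow> nat" where
  "graph_dist V E u v = (LEAST n. walk_of_length V E n u v)"

definition graph_connected :: "'v set \<Rightarrow> ('v \<Rightarrow> 'v \<Rightarrow> bool) \<Rightarrow> bool" where
  "graph_connected V E \<longleftrightarrow> (\<forall>u \<in> V. \<forall>v \<in> V. reachable V E u v)"

definition graph_diameter :: "'v set \<Rightarrow> ('v \<Rightarrow> 'v \<Rightarrow> bool) \<Rightarrow> nat" where
  "graph_diameter V E = Max {graph_dist V E u v | u v. u \<in> V \<and> v \<in> V}"

definition connected_components :: "'v set \<Rightarrow> ('v \<Rightarrow> 'v \<Rightarrow> bool) \<Rightarrow> 'v set set" where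
  "connected_components V E = V // {(u, v). u \<in> V \<and> v \<in> V \<and> reachable V E u v}"

definition num_components :: "'v set \<Rightarrow> ('v \<Rightarrow> 'v \<Rightarrow> bool) \<Rightarrow> nat" where
  "num_components V E = card (connected_components V E)"

end

theory Submission
  imports Defs
begin

lemma walk_0: "walk_of_length V E 0 u v \<longleftrightarrow> u \<in> V \<and> u = v"
proof
  assume "walk_of_length V E 0 u v"
  then show "u \<in> V \<and> u = v" unfolding walk_of_length_def is_walk_def
    by (auto simp: length_Suc_conv)
next
  assume "u \<in> V \<and> u = v"
  then show "walk_of_length V E 0 u v" unfolding walk_of_length_def is_walk_def
    by (intro exI[of _ "[v]"]) auto
qed

lemma walk_Suc: "walk_of_length V E (Suc n) u v \<longleftrightarrow> u \<in> V \<and> (\<exists>w. E u w \<and> walk_of_length V E n w v)"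
proof
  assume "walk_of_length V E (Suc n) u v"
  then obtain xs where xs: "is_walk V E xs" "hd xs = u" "last xs = v" "length xs = Suc (Suc n)"
    unfolding walk_of_length_def by blast
  then obtain y ys where ys: "xs = y # ys" by (cases xs) auto
  have "ys \<noteq> []" using xs ys by auto
  have "is_walk V E ys" using xs(1) ys \<open>ys \<noteq> []\<close> unfolding is_walk_def
    by auto
  moreover have "E u (hd ys)" using xs(1,2) ys \<open>ys \<noteq> []\<close> unfolding is_walk_def
    by (metis Suc_less_eq hd_conv_nth length_Cons length_greater_0_conv list.sel(1) nth_Cons_0 nth_Cons_Suc zero_less_Suc)
  moreover have "walk_of_length V E n (hd ys) v" using calculation(1) xs ys \<open>ys \<noteq> []\<close>
    unfolding walk_of_length_def by auto
  moreover have "u \<in> V" using xs ys unfolding is_walk_def by auto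
  ultimately show "u \<in> V \<and> (\<exists>w. E u w \<and> walk_of_length V E n w v)" by blast
next
  assume "u \<in> V \<and> (\<exists>w. E u w \<and> walk_of_length V E n w v)"
  then obtain w xs where u: "u \<in> V" "E u w" and xs: "is_walk V E xs" "hd xs = w" "last xs = v" "length xs = Suc n"
    unfolding walk_of_length_def by blast
  have "is_walk V E (u # xs)" using xs u unfolding is_walk_def
    by (auto simp: nth_Cons split: nat.splits) (metis hd_conv_nth)
  then show "walk_of_length V E (Suc n) u v" unfolding walk_of_length_def
    using xs by (intro exI[of _ "u # xs"]) auto
qed

lemma walk_in: "walk_of_length V E n u v \<Longrightarrow> u \<in> V \<and> v \<in> V"
  by (induction n arbitrary: u) (auto simp: walk_0 walk_Suc)

lemma walk_trans: "walk_of_length V E n u v \<Longrightarrow> walk_of_length V E k v w \<Longrightarrow> walk_of_length V E (n + k) u w"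
  by (induction n arbitrary: u) (auto simp: walk_0 walk_Suc)

lemma walk_sym:
  assumes sym: "\<And>x y. E x y \<Longrightarrow> E y x"
  shows "walk_of_length V E n u v \<Longrightarrow> walk_of_length V E n v u"
proof (induction n arbitrary: u)
  case 0 then show ?case by (auto simp: walk_0)
next
  case (Suc n)
  then obtain w where w: "u \<in> V" "E u w" "walk_of_length V E n w v" by (auto simp: walk_Suc)
  have "walk_of_length V E n v w" using Suc.IH w by blast
  moreover have "walk_of_length V E 1 w u" using w walk_in[OF w(3)] sym
    by (auto simp: walk_Suc walk_0)
  ultimately show ?case using walk_trans by fastforce
qed

lemma walk_map:
  assumes fV: "\<And>P. P \<in> VB \<Longrightarrow> f P \<in> VA"
    and fE: "\<And>P Q. P \<in> VB \<Longrightarrow> Q \<in> VB \<Longrightarrow> EB P Q \<Longrightarrow> f P = f Q \<or> EA (f P) (f Q)"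
  shows "walk_of_length VB EB n P Q \<Longrightarrow> \<exists>k\<le>n. walk_of_length VA EA k (f P) (f Q)"
proof (induction n arbitrary: P)
  case 0 then show ?case using fV by (auto simp: walk_0)
next
  case (Suc n)
  then obtain w where w: "P \<in> VB" "EB P w" "walk_of_length VB EB n w Q" by (auto simp: walk_Suc)
  obtain k where k: "k \<le> n" "walk_of_length VA EA k (f w) (f Q)" using Suc.IH w by blast
  have "w \<in> VB" using walk_in[OF w(3)] by blast
  from fE[OF w(1) this w(2)] show ?case
  proof
    assume "f P = f w" then show ?thesis using k by (intro exI[of _ k]) auto
  next
    assume "EA (f P) (f w)" then show ?thesis using k fV[OF w(1)]
      by (intro exI[of _ "Suc k"]) (auto simp: walk_Suc)
  qed
qed

lemma reach_trans: "reachable V E u v \<Longrightarrow> reachable V E v w \<Longrightarrow> reachable V E u w"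
  unfolding reachable_def using walk_trans by metis

lemma orbit_in:
  fixes A :: "('b, 'c) monoid_scheme" and \<phi> :: "'b \<Rightarrow> 'a \<Rightarrow> 'a"
  assumes "group_action A Sx \<phi>" "x \<in> Sx" "y \<in> orbit A \<phi> x" shows "y \<in> Sx"
proof -
  obtain g where "g \<in> carrier A" "y = \<phi> g x" using assms(3) unfolding orbit_def by blast
  then show ?thesis using group_action.element_image[OF assms(1)] assms(2) by blast
qed

lemma orbit_same:
  fixes A :: "('b, 'c) monoid_scheme" and \<phi> :: "'b \<Rightarrow> 'a \<Rightarrow> 'a"
  assumes ga: "group_action A Sx \<phi>" and x: "x \<in> Sx" and y: "y \<in> orbit A \<phi> x"
  shows "orbit A \<phi> y = orbit A \<phi> x"
proof -
  have yX: "y \<in> Sx" using orbit_in[OF ga x y] .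
  have xy: "x \<in> orbit A \<phi> y" using group_action.orbit_sym[OF ga x yX y] .
  show ?thesis
  proof
    show "orbit A \<phi> y \<subseteq> orbit A \<phi> x"
      using group_action.orbit_trans[OF ga x yX _ y] orbit_in[OF ga yX] by blast
    show "orbit A \<phi> x \<subseteq> orbit A \<phi> y"
      using group_action.orbit_trans[OF ga yX x _ xy] orbit_in[OF ga x] by blast
  qed
qed

theorem lemma2p1:
  fixes G :: "('a, 'd) monoid_scheme" and A :: "('b, 'c) monoid_scheme"
    and \<phi> :: "'b \<Rightarrow> 'a \<Rightarrow> 'a" and B :: "'b set" and d m :: nat
  assumes "acts_by_automorphisms A G \<phi>"
    and "finite (carrier G)" and "finite (carrier A)"
    and "subgroup B A"
  shows "(graph_connected (orbit_graph_vertices (A\<lparr>carrier := B\<rparr>) G \<phi>) (orbit_graph_adj G)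
           \<and> graph_diameter (orbit_graph_vertices (A\<lparr>carrier := B\<rparr>) G \<phi>) (orbit_graph_adj G) = d
         \<longrightarrow> graph_connected (orbit_graph_vertices A G \<phi>) (orbit_graph_adj G)
           \<and> graph_diameter (orbit_graph_vertices A G \<phi>) (orbit_graph_adj G) \<le> d)
       \<and> (num_components (orbit_graph_vertices (A\<lparr>carrier := B\<rparr>) G \<phi>) (orbit_graph_adj G) = m
         \<longrightarrow> num_components (orbit_graph_vertices A G \<phi>) (orbit_graph_adj G) \<le> m)"
proof -
  define AB where "AB = A\<lparr>carrier := B\<rparr>"
  define VA where "VA = orbit_graph_vertices A G \<phi>"
  define VB where "VB = orbit_graph_vertices AB G \<phi>"
  define E where "E = orbit_graph_adj G"
  define Sx where "Sx = carrier G - {\<one>\<^bsub>G\<^esub>}"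
  have ga: "group_action A (carrier G) \<phi>" using assms(1) unfolding acts_by_automorphisms_def by blast
  have BA: "B \<subseteq> carrier A" using assms(4) subgroup.subset by blast
  have oneB: "\<one>\<^bsub>A\<^esub> \<in> B" using assms(4) subgroup.one_closed by blast
  have VA_eq: "VA = orbit A \<phi> ` Sx" unfolding VA_def Sx_def orbit_graph_vertices_def by auto
  have VB_eq: "VB = orbit AB \<phi> ` Sx" unfolding VB_def Sx_def orbit_graph_vertices_def by auto
  have finX: "finite Sx" using assms(2) unfolding Sx_def by auto
  have finVA: "finite VA" using VA_eq finX by simp
  have finVB: "finite VB" using VB_eq finX by simp
  have XG: "Sx \<subseteq> carrier G" unfolding Sx_def by auto
  have self: "y \<in> orbit AB \<phi> y" if "y \<in> Sx" for y
  proof -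
    have "\<phi> \<one>\<^bsub>A\<^esub> y = y" using group_action.id_eq_one[OF ga] that XG
      by (metis restrict_apply' subsetD)
    then show ?thesis unfolding orbit_def AB_def using oneB by force
  qed
  have sub: "orbit AB \<phi> x \<subseteq> orbit A \<phi> x" for x
    unfolding orbit_def AB_def using BA by auto
  define f where "f P = orbit A \<phi> (SOME x. x \<in> Sx \<and> P = orbit AB \<phi> x)" for P
  have fP: "f P \<in> VA \<and> P \<subseteq> f P" if "P \<in> VB" for P
  proof -
    have "\<exists>x. x \<in> Sx \<and> P = orbit AB \<phi> x" using that VB_eq by auto
    then have "(SOME x. x \<in> Sx \<and> P = orbit AB \<phi> x) \<in> Sx \<and> P = orbit AB \<phi> (SOME x. x \<in> Sx \<and> P = orbit AB \<phi> x)"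
      by (rule someI_ex)
    then show ?thesis unfolding f_def using VA_eq sub by auto
  qed
  have fsurj: "\<exists>P\<in>VB. f P = U" if UV: "U \<in> VA" for U
  proof -
    obtain y where y: "y \<in> Sx" "U = orbit A \<phi> y" using UV VA_eq by auto
    define P where "P = orbit AB \<phi> y"
    have PVB: "P \<in> VB" using VB_eq y P_def by auto
    have "\<exists>x. x \<in> Sx \<and> P = orbit AB \<phi> x" using y P_def by auto
    then have x: "(SOME x. x \<in> Sx \<and> P = orbit AB \<phi> x) \<in> Sx \<and> P = orbit AB \<phi> (SOME x. x \<in> Sx \<and> P = orbit AB \<phi> x)"
      by (rule someI_ex)
    define x where "x = (SOME x. x \<in> Sx \<and> P = orbit AB \<phi> x)"
    have "y \<in> orbit A \<phi> x" using self[OF y(1)] sub x P_def x_def by auto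
    then have "orbit A \<phi> y = orbit A \<phi> x" using orbit_same[OF ga] x x_def XG by blast
    then have "f P = U" unfolding f_def using x_def y by simp
    then show ?thesis using PVB by blast
  qed
  have fE: "f P = f Q \<or> E (f P) (f Q)" if "P \<in> VB" "Q \<in> VB" "E P Q" for P Q
  proof -
    from that(3) obtain x y where xy: "P \<noteq> Q" "x \<in> P" "y \<in> Q" "x \<otimes>\<^bsub>G\<^esub> y = y \<otimes>\<^bsub>G\<^esub> x"
      unfolding E_def orbit_graph_adj_def by blast
    have "P \<subseteq> f P" "Q \<subseteq> f Q" using fP that(1,2) by auto
    then show ?thesis using xy unfolding E_def orbit_graph_adj_def by blast
  qed
  have wm: "\<exists>k\<le>n. walk_of_length VA E k (f P) (f Q)" if "walk_of_length VB E n P Q" for n P Q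
    using walk_map[of VB f VA E E, OF _ fE that] fP by blast
  have part1: "graph_connected VA E \<and> graph_diameter VA E \<le> d"
    if conn: "graph_connected VB E" and diam: "graph_diameter VB E = d"
  proof -
    have key: "\<exists>k. walk_of_length VA E k U V \<and> k \<le> graph_dist VB E P Q"
      if "P \<in> VB" "Q \<in> VB" "f P = U" "f Q = V" for P Q U V
    proof -
      have "\<exists>n. walk_of_length VB E n P Q" using conn that unfolding graph_connected_def reachable_def by blast
      then have "walk_of_length VB E (graph_dist VB E P Q) P Q"
        unfolding graph_dist_def by (rule LeastI_ex)
      then show ?thesis using wm that by fastforce
    qed
    have c: "graph_connected VA E"
      unfolding graph_connected_def reachable_def
    proof (intro ballI)
      fix U V assume UV: "U \<in> VA" "V \<in> VA"
      obtain P where "P \<in> VB" "f P = U" using fsurj[OF UV(1)] by blast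
      moreover obtain Q where "Q \<in> VB" "f Q = V" using fsurj[OF UV(2)] by blast
      ultimately show "\<exists>n. walk_of_length VA E n U V" using key by blast
    qed
    have "graph_diameter VA E \<le> d"
    proof (cases "VA = {}")
      case True
      then have "VB = {}" using fP by blast
      then show ?thesis using True diam unfolding graph_diameter_def by simp
    next
      case False
      have finSA: "finite {graph_dist VA E u v | u v. u \<in> VA \<and> v \<in> VA}"
      proof -
        have "{graph_dist VA E u v | u v. u \<in> VA \<and> v \<in> VA} = (\<lambda>(u,v). graph_dist VA E u v) ` (VA \<times> VA)" by auto
        then show ?thesis using finVA by simp
      qed
      have finSB: "finite {graph_dist VB E u v | u v. u \<in> VB \<and> v \<in> VB}"
      proof -
        have "{graph_dist VB E u v | u v. u \<in> VB \<and> v \<in> VB} = (\<lambda>(u,v). graph_dist VB E u v) ` (VB \<times> VB)" by auto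
        then show ?thesis using finVB by simp
      qed
      have "graph_dist VA E U V \<le> d" if UVin: "U \<in> VA" "V \<in> VA" for U V
      proof -
        obtain P Q where PQ: "P \<in> VB" "Q \<in> VB" "f P = U" "f Q = V"
          using fsurj[OF UVin(1)] fsurj[OF UVin(2)] by blast
        obtain k where k: "walk_of_length VA E k U V" "k \<le> graph_dist VB E P Q" using key[OF PQ] by blast
        have "graph_dist VA E U V \<le> k" unfolding graph_dist_def using k(1) by (rule Least_le)
        moreover have "graph_dist VB E P Q \<le> d" unfolding diam[symmetric] graph_diameter_def
          using PQ finSB by (intro Max_ge) auto
        ultimately show ?thesis using k by linarith
      qed
      moreover have ne: "{graph_dist VA E u v | u v. u \<in> VA \<and> v \<in> VA} \<noteq> {}" using False by blast
      ultimately show ?thesis unfolding graph_diameter_def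
        by (subst Max_le_iff[OF finSA ne]) blast
    qed
    then show ?thesis using c by blast
  qed
  define RA where "RA = {(u, v). u \<in> VA \<and> v \<in> VA \<and> reachable VA E u v}"
  define RB where "RB = {(u, v). u \<in> VB \<and> v \<in> VB \<and> reachable VB E u v}"
  define g where "g C = RA `` (f ` C)" for C
  have quot: "VA // RA \<subseteq> g ` (VB // RB)"
  proof
    fix Y assume "Y \<in> VA // RA"
    then obtain U where U: "U \<in> VA" "Y = RA `` {U}" by (auto elim: quotientE)
    obtain P where P: "P \<in> VB" "f P = U" using fsurj[OF U(1)] by blast
    have CB: "RB `` {P} \<in> VB // RB" using P(1) by (rule quotientI)
    have "g (RB `` {P}) = RA `` {U}"
    proof
      have "walk_of_length VB E 0 P P" using P(1) walk_0[of VB E P P] by simp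
      then have "reachable VB E P P" unfolding reachable_def by (rule exI)
      then have "(P, P) \<in> RB" unfolding RB_def using P(1) by simp
      then have "U \<in> f ` (RB `` {P})" using P(2) by blast
      then show "RA `` {U} \<subseteq> g (RB `` {P})" unfolding g_def by (intro Image_mono) auto
    next
      show "g (RB `` {P}) \<subseteq> RA `` {U}"
      proof
        fix z assume "z \<in> g (RB `` {P})"
        then obtain P' where P': "(P, P') \<in> RB" "(f P', z) \<in> RA" unfolding g_def by blast
        have r1: "reachable VB E P P'" using P'(1) unfolding RB_def by simp
        have r2: "reachable VA E (f P') z" and zV: "z \<in> VA" using P'(2) unfolding RA_def by simp_all
        obtain n where "walk_of_length VB E n P P'" using r1 unfolding reachable_def by blast
        then obtain k where "walk_of_length VA E k (f P) (f P')" using wm by blast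
        then have "reachable VA E (f P) (f P')" unfolding reachable_def by blast
        then have "reachable VA E U z" using reach_trans[OF _ r2] P(2) by simp
        then show "z \<in> RA `` {U}" using zV U(1) unfolding RA_def by simp
      qed
    qed
    then show "Y \<in> g ` (VB // RB)" using CB U(2) by (metis image_eqI)
  qed
  have finQ: "finite (VB // RB)" by (rule finite_quotient[OF finVB]) (auto simp: RB_def)
  have "card (VA // RA) \<le> card (VB // RB)"
    using card_mono[OF finite_imageI[OF finQ] quot] card_image_le[OF finQ, of g] by linarith
  then have part2: "num_components VA E \<le> num_components VB E"
    unfolding num_components_def connected_components_def RA_def RB_def .
  show ?thesis using part1 part2 unfolding AB_def VA_def VB_def E_def by (intro conjI impI) simp_all
qed

end
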